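(* Let $\Delta\ge 1$ and $0\le\lambda<1$. Let $T$ be a rooted tree with $n$ vertices and $\Delta(T)\le\Delta$. Then there is a subtree $Q$ of $T$ containing the root with $|Q|\in[(1-2\lambda)n,\,(1-\lambda)n+2\Delta]$ such that $T\setminus Q$ has at most $\Delta$ connected components, each of order at most $\lambda n$.
   Context: For graphs $T\supseteq Q$, $T\setminus Q$ denotes the graph with edge set $E(T)\setminus E(Q)$ and isolated vertices deleted. $|Q|$ is the number of vertices of $Q$; $\Delta(T)$ is the maximum degree. *)

theory Defs
  imports Complex_Main
begin

definition is_graph :: "'a set \<Rightarrow> 'a set set \<Rightarrow> bool" where
  "is_graph V E \<longleftrightarrow> finite V \<and>
     (\<forall>e\<in>E. \<exists>u v. e = {u, v} \<and> u \<noteq> v \<and> u \<in> V \<and> v \<in> V)"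

definition adj :: "'a set set \<Rightarrow> 'a \<Rightarrow> 'a \<Rightarrow> bool" where
  "adj E u v \<longleftrightarrow> {u, v} \<in> E"

definition conn :: "'a set set \<Rightarrow> 'a \<Rightarrow> 'a \<Rightarrow> bool" where
  "conn E = (adj E)\<^sup>*\<^sup>*"

definition connected_graph :: "'a set \<Rightarrow> 'a set set \<Rightarrow> bool" where
  "connected_graph V E \<longleftrightarrow> (\<forall>u\<in>V. \<forall>v\<in>V. conn E u v)"

text \<open>Acyclic: no edge lies on a cycle, i.e. after deleting any edge its endpoints
  are no longer connected.\<close>
definition acyclic_graph :: "'a set set \<Rightarrow> bool" where
  "acyclic_graph E \<longleftrightarrow> (\<forall>e\<in>E. \<forall>u v. e = {u, v} \<longrightarrow> \<not> conn (E - {e}) u v)"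

definition is_tree :: "'a set \<Rightarrow> 'a set set \<Rightarrow> bool" where
  "is_tree V E \<longleftrightarrow> is_graph V E \<and> V \<noteq> {} \<and> connected_graph V E \<and> acyclic_graph E"

definition degree :: "'a set set \<Rightarrow> 'a \<Rightarrow> nat" where
  "degree E v = card {e\<in>E. v \<in> e}"

definition components :: "'a set \<Rightarrow> 'a set set \<Rightarrow> 'a set set" where
  "components V E = (\<lambda>v. {u\<in>V. conn E v u}) ` V"

text \<open>T minus Q: edge set E(T) - E(Q), isolated vertices deleted, so the vertex
  set is the set of endpoints of the remaining edges.\<close>
definition diff_verts :: "'a set set \<Rightarrow> 'a set set \<Rightarrow> 'a set" where
  "diff_verts ET EQ = \<Union>(ET - EQ)"

end

theory Submission
  imports Defs
begin


lemma conn_sym: "conn F x y \<Longrightarrow> conn F y x"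
  unfolding conn_def
proof (induction rule: rtranclp.induct)
  case (rtrancl_refl a) then show ?case by simp
next
  case (rtrancl_into_rtrancl a b c)
  have "adj F c b" using rtrancl_into_rtrancl(2) by (simp add: adj_def insert_commute)
  then show ?case using rtrancl_into_rtrancl(3) by (meson converse_rtranclp_into_rtranclp)
qed

lemma conn_trans: "conn F x y \<Longrightarrow> conn F y z \<Longrightarrow> conn F x z"
  unfolding conn_def by (rule rtranclp_trans)

lemma conn_step: "conn F x y \<Longrightarrow> {y,z} \<in> F \<Longrightarrow> conn F x z"
  unfolding conn_def adj_def by (simp add: rtranclp.rtrancl_into_rtrancl)

lemma conn_refl: "conn F x x" unfolding conn_def by simp

lemma conn_mono: "conn F x y \<Longrightarrow> F \<subseteq> G \<Longrightarrow> conn G x y"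
  unfolding conn_def
proof (induction rule: rtranclp.induct)
  case (rtrancl_refl a) then show ?case by simp
next
  case (rtrancl_into_rtrancl a b c)
  then show ?case by (metis adj_def conn_def conn_step subsetD)
qed

lemma conn_start: "conn F a u \<Longrightarrow> a \<noteq> u \<Longrightarrow> \<exists>f\<in>F. a \<in> f"
  unfolding conn_def by (induction rule: converse_rtranclp_induct) (auto simp: adj_def)

locale tr =
  fixes V :: "'a set" and E :: "'a set set"
  assumes tree: "is_tree V E"
begin

lemma finV: "finite V" using tree by (simp add: is_tree_def is_graph_def)

lemma edgeE: "e \<in> E \<Longrightarrow> \<exists>u v. e = {u,v} \<and> u\<noteq>v \<and> u\<in>V \<and> v\<in>V"
  using tree unfolding is_tree_def is_graph_def by blast

lemma adjE: "{x,y} \<in> E \<Longrightarrow> x \<noteq> y \<and> x \<in> V \<and> y \<in> V"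
  using edgeE[of "{x,y}"] by (auto simp: doubleton_eq_iff)

lemma finE: "finite E"
proof -
  have "E \<subseteq> Pow V" using edgeE by blast
  then show ?thesis using finV by (meson finite_Pow_iff finite_subset)
qed

lemma connV: "conn F a u \<Longrightarrow> F \<subseteq> E \<Longrightarrow> a \<in> V \<Longrightarrow> u \<in> V"
  unfolding conn_def
proof (induction rule: rtranclp.induct)
  case (rtrancl_refl a) then show ?case by simp
next
  case (rtrancl_into_rtrancl a b c)
  then show ?case using adjE unfolding adj_def by blast
qed

lemma connE: "u\<in>V \<Longrightarrow> w\<in>V \<Longrightarrow> conn E u w"
  using tree by (simp add: is_tree_def connected_graph_def)

lemma acyc: "{a,b}\<in>E \<Longrightarrow> \<not> conn (E - {{a,b}}) a b"
  using tree unfolding is_tree_def acyclic_graph_def by blast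

definition side where "side a b = {u. conn (E - {{a,b}}) b u}"

lemma b_in_side: "b \<in> side a b" by (simp add: side_def conn_refl)

lemma a_notin_side: "{a,b}\<in>E \<Longrightarrow> a \<notin> side a b"
  unfolding side_def by (metis acyc conn_sym mem_Collect_eq)

lemma side_closed: assumes "y \<in> side a b" "{y,z} \<in> E" "{y,z} \<noteq> {a,b}" shows "z \<in> side a b"
proof -
  have "{y,z} \<in> E - {{a,b}}" using assms(2,3) by simp
  then show ?thesis using assms(1) conn_step[of "E - {{a,b}}" b y z] unfolding side_def by simp
qed

lemma side_V: assumes "{a,b}\<in>E" shows "side a b \<subseteq> V"
proof
  fix u assume "u \<in> side a b"
  then show "u \<in> V" unfolding side_def using connV[of "E - {{a,b}}" b u] adjE[OF assms] by auto
qed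

lemma partition: assumes "{a,b}\<in>E" "u\<in>V" shows "u \<in> side a b \<or> u \<in> side b a"
proof -
  have a: "a \<in> V" using adjE assms by blast
  have "conn E a u" using connE a assms by blast
  then show ?thesis unfolding conn_def
  proof (induction rule: rtranclp_induct)
    case base
    then show ?case using b_in_side by blast
  next
    case (step y z)
    have yz: "{y,z} \<in> E" using step(2) by (simp add: adj_def)
    show ?case
    proof (cases "{y,z} = {a,b}")
      case True
      then have "z = a \<or> z = b" by (auto simp: doubleton_eq_iff)
      then show ?thesis using b_in_side by blast
    next
      case False
      then have "{y,z} \<noteq> {b,a}" by (simp add: insert_commute)
      then show ?thesis using step(3) side_closed yz False by blast
    qed
  qed
qed

lemma side_disj_ab: "{a,b}\<in>E \<Longrightarrow> side a b \<inter> side b a = {}"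
proof (rule ccontr)
  assume e: "{a,b}\<in>E" and "side a b \<inter> side b a \<noteq> {}"
  then obtain u where "conn (E - {{a,b}}) b u" "conn (E - {{b,a}}) a u" unfolding side_def by blast
  then have "conn (E - {{a,b}}) a b" by (metis conn_sym conn_trans insert_commute)
  then show False using acyc e by blast
qed

lemma cross:
  assumes e: "{a,b}\<in>E" and F: "F \<subseteq> E" and c: "conn F s y" and s: "s \<notin> side a b" and y: "y \<in> side a b"
  shows "{a,b} \<in> F \<and> conn F s a"
  using c y unfolding conn_def
proof (induction rule: rtranclp_induct)
  case base
  then show ?case using s by blast
next
  case (step y z)
  show ?case
  proof (cases "y \<in> side a b")
    case True
    then show ?thesis using step by blast
  next
    case False
    have yz: "{y,z} \<in> F" using step(2) by (simp add: adj_def)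
    then have zy: "{z,y} \<in> E" using F by (auto simp: insert_commute)
    have "{z,y} = {a,b}"
      using side_closed[OF step(4) zy] False by blast
    moreover have "y \<noteq> b" using False b_in_side by blast
    ultimately have "y = a" "{a,b} = {y,z}" by (auto simp: doubleton_eq_iff)
    then show ?thesis using yz step(1) by simp
  qed
qed

lemma inside: assumes e: "{a,b}\<in>E" and c: "conn (E - {{a,b}}) b u"
  shows "conn {f\<in>E. f \<subseteq> side a b} b u"
  using c unfolding conn_def
proof (induction rule: rtranclp_induct)
  case base
  then show ?case by (simp)
next
  case (step y z)
  have yz: "{y,z} \<in> E - {{a,b}}" using step(2) by (simp add: adj_def)
  have "y \<in> side a b" using step(1) by (simp add: side_def conn_def)
  moreover have "z \<in> side a b" using step(1,2) by (simp add: side_def conn_def)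
  ultimately have "{y,z} \<in> {f\<in>E. f \<subseteq> side a b}" using yz by auto
  then show ?case using step(3) by (metis conn_def conn_step)
qed

lemma nbr: assumes "v\<in>V" "u\<in>V" "u\<noteq>v" shows "\<exists>c. {v,c}\<in>E \<and> u \<in> side v c"
proof -
  have "conn E v u" using connE assms by blast
  then have "u = v \<or> (\<exists>c. {v,c}\<in>E \<and> u \<in> side v c)" unfolding conn_def
  proof (induction rule: rtranclp_induct)
    case base
    then show ?case by simp
  next
    case (step y z)
    have yz: "{y,z} \<in> E" using step(2) by (simp add: adj_def)
    from step(3) show ?case
    proof
      assume "y = v" then show ?thesis using yz b_in_side by blast
    next
      assume "\<exists>c. {v,c}\<in>E \<and> y \<in> side v c"
      then obtain c where c: "{v,c}\<in>E" "y \<in> side v c" by blast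
      show ?thesis
      proof (cases "{y,z} = {v,c}")
        case True
        have "y \<noteq> v" using c a_notin_side by blast
        then have "z = v" using True by (auto simp: doubleton_eq_iff)
        then show ?thesis by simp
      next
        case False
        then show ?thesis using side_closed[OF c(2) yz] c by blast
      qed
    qed
  qed
  then show ?thesis using assms by blast
qed

lemma side_disj: assumes "{v,c}\<in>E" "{v,c'}\<in>E" "c\<noteq>c'" shows "side v c \<inter> side v c' = {}"
proof (rule ccontr)
  assume "side v c \<inter> side v c' \<noteq> {}"
  then obtain x where x: "x \<in> side v c" "x \<in> side v c'" by blast
  have c'E: "{c',v} \<in> E" using assms by (simp add: insert_commute)
  have "c' \<notin> side v c"
  proof
    assume "c' \<in> side v c"
    moreover have "{c',v} \<noteq> {v,c}" using assms(3) by (auto simp: doubleton_eq_iff)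
    ultimately have "v \<in> side v c" using side_closed c'E by blast
    then show False using a_notin_side assms by blast
  qed
  moreover have "conn (E - {{v,c'}}) c' x" using x by (simp add: side_def)
  ultimately have "conn (E - {{v,c'}}) c' v" using cross[OF assms(1), of "E - {{v,c'}}" c' x] x by blast
  then have "conn (E - {{v,c'}}) v c'" by (rule conn_sym)
  then show False using acyc[OF assms(2)] by simp
qed

end


lemma greedy:
  fixes w :: "'b \<Rightarrow> real"
  assumes "finite A"
  shows "(\<forall>a\<in>A. 0 \<le> w a \<and> w a \<le> M) \<longrightarrow> L \<le> sum w A \<longrightarrow>
         (\<exists>S\<subseteq>A. L \<le> sum w S \<and> (S = {} \<or> sum w S \<le> L + M))"
  using assms
proof (induction A rule: finite_induct)
  case empty
  then show ?case by auto
next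
  case (insert a A)
  show ?case
  proof (intro impI)
    assume h1: "\<forall>x\<in>insert a A. 0 \<le> w x \<and> w x \<le> M" and h2: "L \<le> sum w (insert a A)"
    show "\<exists>S\<subseteq>insert a A. L \<le> sum w S \<and> (S = {} \<or> sum w S \<le> L + M)"
    proof (cases "L \<le> sum w A")
      case True
      have "\<forall>x\<in>A. 0 \<le> w x \<and> w x \<le> M" using h1 by simp
      then obtain S where "S \<subseteq> A" "L \<le> sum w S \<and> (S = {} \<or> sum w S \<le> L + M)"
        using insert.IH True by blast
      then show ?thesis by (intro exI[of _ S]) auto
    next
      case False
      have "sum w (insert a A) = w a + sum w A" using insert.hyps by simp
      then have "sum w (insert a A) \<le> L + M" using False h1 by auto
      then show ?thesis using h2 by blast
    qed
  qed
qed

locale rtr = tr +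
  fixes r
  assumes rV: "r \<in> V"
begin

definition star where "star v = {f\<in>E. v \<in> f}"
definition T where "T v = insert v {u\<in>V. \<not> conn (E - star v) r u}"
definition Ch where "Ch v = {c. {v,c}\<in>E \<and> r \<notin> side v c}"

lemma T_r: "T r = V"
proof -
  have "\<not> conn (E - star r) r u" if "u \<noteq> r" for u
    using conn_start[of "E - star r" r u] that by (auto simp: star_def)
  then show ?thesis using rV unfolding T_def by auto
qed

lemma finT: "finite (T v)"
proof -
  have "T v \<subseteq> insert v V" by (auto simp: T_def)
  then show ?thesis using finV finite_subset by blast
qed

lemma ChE: "c \<in> Ch v \<Longrightarrow> {v,c} \<in> E \<and> r \<notin> side v c" by (simp add: Ch_def)

lemma side_sub_T: assumes "c \<in> Ch v" "x = v \<or> x = c" shows "side v c \<subseteq> T x"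
proof
  fix u assume u: "u \<in> side v c"
  have e: "{v,c}\<in>E" and r: "r \<notin> side v c" using assms by (auto simp: Ch_def)
  have "u \<in> V" using side_V[OF e] u by blast
  moreover have "\<not> conn (E - star x) r u"
  proof
    assume "conn (E - star x) r u"
    then have "{v,c} \<in> E - star x" using cross[OF e, of "E - star x" r u] r u by blast
    then show False using assms(2) by (auto simp: star_def)
  qed
  ultimately show "u \<in> T x" by (simp add: T_def)
qed

lemma in_side_conn: assumes e: "{a,b}\<in>E" and "x \<in> side a b" "y \<in> side a b"
  shows "conn {f\<in>E. f \<subseteq> side a b} x y"
proof -
  have "conn {f\<in>E. f \<subseteq> side a b} b x" using inside[OF e] assms(2) by (simp add: side_def)
  moreover have "conn {f\<in>E. f \<subseteq> side a b} b y" using inside[OF e] assms(3) by (simp add: side_def)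
  ultimately show ?thesis by (meson conn_sym conn_trans)
qed

lemma avoid: assumes e: "{a,b}\<in>E" shows "{f\<in>E. f \<subseteq> side a b} \<subseteq> E - star a"
  using a_notin_side[OF e] by (auto simp: star_def)

lemma T_sub_side: assumes "c \<in> Ch v" shows "T c \<subseteq> side v c"
proof
  fix u assume u: "u \<in> T c"
  have e: "{v,c}\<in>E" and r: "r \<notin> side v c" using assms by (auto simp: Ch_def)
  have e': "{c,v} \<in> E" using e by (simp add: insert_commute)
  show "u \<in> side v c"
  proof (rule ccontr)
    assume nu: "u \<notin> side v c"
    then have "u \<noteq> c" using b_in_side by blast
    then have uV: "u \<in> V" and nc: "\<not> conn (E - star c) r u" using u by (auto simp: T_def)
    have "u \<in> side c v" using partition[OF e uV] nu by blast
    moreover have "r \<in> side c v" using partition[OF e rV] r by blast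
    ultimately have "conn {f\<in>E. f \<subseteq> side c v} r u" using in_side_conn[OF e', of r u] by blast
    then have "conn (E - star c) r u" using conn_mono[OF _ avoid[OF e']] by blast
    then show False using nc by blast
  qed
qed

lemma T_split: assumes "v\<in>V" shows "T v \<subseteq> insert v (\<Union>c\<in>Ch v. side v c)"
proof
  fix u assume u: "u \<in> T v"
  show "u \<in> insert v (\<Union>c\<in>Ch v. side v c)"
  proof (cases "u = v")
    case True then show ?thesis by simp
  next
    case False
    then have uV: "u\<in>V" and nc: "\<not> conn (E - star v) r u" using u by (auto simp: T_def)
    obtain c where e: "{v,c}\<in>E" and uc: "u \<in> side v c" using nbr[OF assms uV False] by blast
    have "r \<notin> side v c"
    proof
      assume "r \<in> side v c"
      then have "conn {f\<in>E. f \<subseteq> side v c} r u" using in_side_conn[OF e, of r u] uc by blast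
      then have "conn (E - star v) r u" using conn_mono[OF _ avoid[OF e]] by blast
      then show False using nc by blast
    qed
    then show ?thesis using e uc by (auto simp: Ch_def)
  qed
qed

lemma Ch_fin_card: "finite (Ch v) \<and> card (Ch v) \<le> degree E v"
proof -
  have inj: "inj_on (\<lambda>c. {v,c}) (Ch v)" by (auto simp: inj_on_def doubleton_eq_iff)
  have sub: "(\<lambda>c. {v,c}) ` Ch v \<subseteq> {e\<in>E. v\<in>e}" by (auto simp: Ch_def)
  have fin: "finite {e\<in>E. v\<in>e}" using finE by simp
  have "finite (Ch v)" using finite_imageD[OF finite_subset[OF sub fin] inj] .
  moreover have "card (Ch v) \<le> card {e\<in>E. v\<in>e}" using card_inj_on_le[OF inj sub fin] .
  ultimately show ?thesis by (simp add: degree_def)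
qed

lemma Ch_disj: "c \<in> Ch v \<Longrightarrow> c' \<in> Ch v \<Longrightarrow> c \<noteq> c' \<Longrightarrow> side v c \<inter> side v c' = {}"
  using side_disj by (simp add: Ch_def)

lemma T_strict: assumes "c \<in> Ch v" shows "card (T c) < card (T v)"
proof -
  have e: "{v,c}\<in>E" using assms by (simp add: Ch_def)
  have "T c \<subseteq> T v" using T_sub_side[OF assms] side_sub_T[OF assms] by blast
  moreover have "v \<in> T v" by (simp add: T_def)
  moreover have "v \<notin> T c" using T_sub_side[OF assms] a_notin_side[OF e] by blast
  ultimately have "T c \<subset> T v" by blast
  then show ?thesis using finT psubset_card_mono by blast
qed

end


context rtr
begin

lemma main:
  assumes D1: "D \<ge> 1" and l0: "0 \<le> lam" and l1: "lam < 1"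
    and deg: "\<forall>v\<in>V. degree E v \<le> D"
  shows "\<exists>VQ EQ. VQ \<subseteq> V \<and> EQ \<subseteq> E \<and> is_tree VQ EQ \<and> r \<in> VQ \<and>
           (1 - 2 * lam) * real (card V) \<le> real (card VQ) \<and>
           real (card VQ) \<le> (1 - lam) * real (card V) + 2 * real D \<and>
           card (components (diff_verts E EQ) (E - EQ)) \<le> D \<and>
           (\<forall>C\<in>components (diff_verts E EQ) (E - EQ). real (card C) \<le> lam * real (card V))"
proof -
  define n where "n = card V"
  define M where "M = {v\<in>V. lam * real n < real (card (T v))}"
  have npos: "n > 0" using finV rV n_def card_gt_0_iff by blast
  have "r \<in> M" using T_r rV npos l1 by (simp add: M_def n_def)
  then obtain v where vM: "v \<in> M" and vmin: "\<And>w. w \<in> M \<Longrightarrow> card (T v) \<le> card (T w)"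
    using ex_has_least_nat[of "\<lambda>w. w \<in> M" r "\<lambda>w. card (T w)"] by blast
  have vV: "v \<in> V" using vM by (simp add: M_def)
  have Tv: "lam * real n < real (card (T v))" using vM by (simp add: M_def)
  have finCh: "finite (Ch v)" and cardCh: "card (Ch v) \<le> D"
    using Ch_fin_card[of v] deg vV by auto
  have sideV: "side v c \<subseteq> V" if "c \<in> Ch v" for c using side_V ChE that by blast
  have finside: "finite (side v c)" if "c \<in> Ch v" for c using sideV[OF that] finV finite_subset by blast
  have small: "real (card (side v c)) \<le> lam * real n" if c: "c \<in> Ch v" for c
  proof -
    have "c \<in> V" using ChE[OF c] adjE by blast
    moreover have "card (T c) < card (T v)" using T_strict[OF c] .
    ultimately have "c \<notin> M" using vmin by fastforce
    then have "real (card (T c)) \<le> lam * real n" using \<open>c \<in> V\<close> by (simp add: M_def)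
    moreover have "side v c = T c" using T_sub_side[OF c] side_sub_T[OF c] by blast
    ultimately show ?thesis by simp
  qed
  have side_pos: "1 \<le> card (side v c)" if "c \<in> Ch v" for c
    using finside[OF that] b_in_side[of c v] card_0_eq[of "side v c"] by fastforce
  define w where "w c = real (card (side v c)) - 1" for c
  have "card (T v) \<le> card (insert v (\<Union>c\<in>Ch v. side v c))"
  proof (rule card_mono)
    show "finite (insert v (\<Union>c\<in>Ch v. side v c))" using finCh finside by blast
    show "T v \<subseteq> insert v (\<Union>c\<in>Ch v. side v c)" using T_split[OF vV] .
  qed
  also have "\<dots> \<le> Suc (card (\<Union>c\<in>Ch v. side v c))"
  proof -
    have "finite (\<Union>c\<in>Ch v. side v c)" using finCh finside by blast
    then show ?thesis by (simp add: card_insert_if)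
  qed
  also have "card (\<Union>c\<in>Ch v. side v c) \<le> (\<Sum>c\<in>Ch v. card (side v c))" using card_UN_le[OF finCh] .
  finally have sumT: "card (T v) \<le> Suc (\<Sum>c\<in>Ch v. card (side v c))" by simp
  have sumw: "sum w (Ch v) = (\<Sum>c\<in>Ch v. real (card (side v c))) - real (card (Ch v))"
    unfolding w_def by (simp add: sum_subtractf)
  have "real (card (T v)) \<le> 1 + (\<Sum>c\<in>Ch v. real (card (side v c)))"
    using sumT by (metis of_nat_Suc of_nat_le_iff of_nat_sum add.commute)
  then have Lw: "lam * real n - 2 * real D \<le> sum w (Ch v)"
    using sumw Tv cardCh D1 by linarith
  have wb: "\<forall>c\<in>Ch v. 0 \<le> w c \<and> w c \<le> lam * real n"
    using side_pos small unfolding w_def by fastforce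
  obtain S where SCh: "S \<subseteq> Ch v" and SL: "lam * real n - 2 * real D \<le> sum w S"
    and SU: "S = {} \<or> sum w S \<le> (lam * real n - 2 * real D) + lam * real n"
    using greedy[OF finCh, of w "lam * real n" "lam * real n - 2 * real D"] wb Lw by blast
  have SU2: "sum w S \<le> 2 * lam * real n" using SU l0 D1 by auto
  have finS: "finite S" using SCh finCh finite_subset by blast
  have disjS: "\<And>c c'. c \<in> S \<Longrightarrow> c' \<in> S \<Longrightarrow> c \<noteq> c' \<Longrightarrow> side v c \<inter> side v c' = {}"
    using Ch_disj SCh by blast
  have vnot: "v \<notin> side v c" if "c \<in> S" for c using a_notin_side ChE SCh that by blast
  have rnot: "r \<notin> side v c" if "c \<in> S" for c using ChE SCh that by blast
  define U where "U = (\<Union>c\<in>S. side v c - {c})"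
  define VQ where "VQ = V - U"
  define EQ where "EQ = {f\<in>E. \<forall>c\<in>S. \<not> f \<subseteq> side v c}"
  have UV: "U \<subseteq> V" unfolding U_def using sideV SCh by blast
  have cardU: "card U = (\<Sum>c\<in>S. card (side v c - {c}))"
    unfolding U_def
  proof (rule card_UN_disjoint[OF finS])
    show "\<forall>i\<in>S. finite (side v i - {i})" using finside SCh by blast
    show "\<forall>i\<in>S. \<forall>j\<in>S. i \<noteq> j \<longrightarrow> (side v i - {i}) \<inter> (side v j - {j}) = {}"
      using disjS by blast
  qed
  have "real (card U) = sum w S"
    unfolding cardU w_def of_nat_sum
  proof (rule sum.cong)
    fix c assume c: "c \<in> S"
    have "card (side v c - {c}) = card (side v c) - 1" using b_in_side finside c SCh by auto
    then show "real (card (side v c - {c})) = real (card (side v c)) - 1"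
      using side_pos c SCh by auto
  qed simp
  moreover have "card VQ = n - card U" unfolding VQ_def n_def using card_Diff_subset[OF _ UV] finV finite_subset UV by metis
  moreover have "card U \<le> n" unfolding n_def using card_mono[OF finV UV] .
  ultimately have cardVQ: "real (card VQ) = real n - sum w S" by simp
  have inner: "f \<subseteq> side v c" if f: "f = {x,y}" "f \<in> E" and c: "c \<in> S" and x: "x \<in> side v c" "x \<noteq> c" for f x y c
  proof -
    have "{v,c} \<in> E" using ChE SCh c by blast
    have "y \<in> side v c"
    proof (rule ccontr)
      assume ny: "y \<notin> side v c"
      then have "{x,y} = {v,c}" using side_closed[OF x(1), of y] f by blast
      then have "x = v" using x(2) by (auto simp: doubleton_eq_iff)
      then show False using vnot[OF c] x by blast
    qed
    then show ?thesis using f x by blast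
  qed
  have EQ_V: "f \<subseteq> VQ" if "f \<in> EQ" for f
  proof -
    have fE: "f \<in> E" and nf: "\<forall>c\<in>S. \<not> f \<subseteq> side v c" using that by (auto simp: EQ_def)
    obtain x y where f: "f = {x,y}" "x \<noteq> y" "x \<in> V" "y \<in> V" using edgeE[OF fE] by blast
    have "x \<notin> U"
    proof
      assume "x \<in> U"
      then obtain c where "c \<in> S" "x \<in> side v c" "x \<noteq> c" unfolding U_def by blast
      then show False using inner[OF f(1) fE] nf by blast
    qed
    moreover have "y \<notin> U"
    proof
      assume "y \<in> U"
      then obtain c where "c \<in> S" "y \<in> side v c" "y \<noteq> c" unfolding U_def by blast
      moreover have "f = {y,x}" using f by (simp add: insert_commute)
      ultimately show False using inner[of f y x] fE nf by blast
    qed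
    ultimately show ?thesis using f unfolding VQ_def by blast
  qed
  have rVQ: "r \<in> VQ" using rV rnot unfolding VQ_def U_def by blast
  define p where "p x = (if \<exists>c\<in>S. x \<in> side v c then (SOME c. c \<in> S \<and> x \<in> side v c) else x)" for x
  have pS: "p x = c" if "c \<in> S" "x \<in> side v c" for x c
  proof -
    have "(SOME c. c \<in> S \<and> x \<in> side v c) = c"
    proof (rule some_equality)
      show "c \<in> S \<and> x \<in> side v c" using that by blast
      show "\<And>c'. c' \<in> S \<and> x \<in> side v c' \<Longrightarrow> c' = c" using disjS that by blast
    qed
    then show ?thesis using that unfolding p_def by auto
  qed
  have pn: "p x = x" if "\<forall>c\<in>S. x \<notin> side v c" for x using that unfolding p_def by auto
  have pVQ: "p u = u" if "u \<in> VQ" for u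
  proof (cases "\<exists>c\<in>S. u \<in> side v c")
    case True
    then obtain c where c: "c \<in> S" "u \<in> side v c" by blast
    then have "u = c" using that unfolding VQ_def U_def by blast
    then show ?thesis using pS c by blast
  next
    case False then show ?thesis using pn by blast
  qed
  have step1: "p x = p y \<or> {p x, p y} \<in> EQ" if xy: "{x,y} \<in> E" and c: "c \<in> S" "x \<in> side v c" for x y c
  proof (cases "y \<in> side v c")
    case True then show ?thesis using pS c by metis
  next
    case False
    have ev: "{v,c} \<in> E" using ChE SCh c by blast
    have "{x,y} = {v,c}" using side_closed[OF c(2) xy] False by blast
    moreover have "x \<noteq> v" using vnot c by blast
    ultimately have xc: "x = c" and yv: "y = v" by (auto simp: doubleton_eq_iff)
    have "p x = c" using pS c by blast
    moreover have "p y = v" using pn vnot yv by blast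
    moreover have "{c,v} \<in> EQ" using ev vnot unfolding EQ_def by (auto simp: insert_commute)
    ultimately show ?thesis by simp
  qed
  have step: "p x = p y \<or> {p x, p y} \<in> EQ" if xy: "{x,y} \<in> E" for x y
  proof (cases "\<exists>c\<in>S. x \<in> side v c")
    case True then show ?thesis using step1 xy by blast
  next
    case nx: False
    show ?thesis
    proof (cases "\<exists>c\<in>S. y \<in> side v c")
      case True
      have yx: "{y,x} \<in> E" using xy by (simp add: insert_commute)
      from True obtain c where "c \<in> S" "y \<in> side v c" by blast
      then have "p y = p x \<or> {p y, p x} \<in> EQ" using step1[OF yx] by blast
      then show ?thesis by (auto simp: insert_commute)
    next
      case False
      then have "{x,y} \<in> EQ" using nx xy unfolding EQ_def by blast
      then show ?thesis using pn nx False by simp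
    qed
  qed
  have pconn: "conn EQ (p r) (p u)" if "u \<in> V" for u
  proof -
    have "conn E r u" using connE rV that by blast
    then show ?thesis unfolding conn_def
    proof (induction rule: rtranclp_induct)
      case base then show ?case by simp
    next
      case (step y z)
      have "{y,z} \<in> E" using step(2) by (simp add: adj_def)
      then have "p y = p z \<or> {p y, p z} \<in> EQ" using \<open>\<And>x y. {x,y} \<in> E \<Longrightarrow> p x = p y \<or> {p x, p y} \<in> EQ\<close> by blast
      then show ?case using step(3) by (metis conn_def conn_step)
    qed
  qed
  have pr: "p r = r" using pn rnot by blast
  have connQ: "connected_graph VQ EQ"
    unfolding connected_graph_def
  proof (intro ballI)
    fix a b assume a: "a \<in> VQ" and b: "b \<in> VQ"
    have "conn EQ r a" using pconn[of a] a pVQ pr unfolding VQ_def by auto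
    moreover have "conn EQ r b" using pconn[of b] b pVQ pr unfolding VQ_def by auto
    ultimately show "conn EQ a b" by (meson conn_sym conn_trans)
  qed
  have EQE: "EQ \<subseteq> E" unfolding EQ_def by blast
  have acQ: "acyclic_graph EQ"
    unfolding acyclic_graph_def
  proof (intro ballI allI impI notI)
    fix e a b assume e: "e \<in> EQ" "e = {a,b}" and c: "conn (EQ - {e}) a b"
    have "conn (E - {e}) a b" using conn_mono[OF c] EQE by blast
    then show False using acyc[of a b] e EQE by blast
  qed
  have graphQ: "is_graph VQ EQ"
    unfolding is_graph_def
  proof
    show "finite VQ" unfolding VQ_def using finV by simp
    show "\<forall>e\<in>EQ. \<exists>u v. e = {u, v} \<and> u \<noteq> v \<and> u \<in> VQ \<and> v \<in> VQ"
    proof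
      fix e assume e: "e \<in> EQ"
      then obtain x y where "e = {x,y}" "x \<noteq> y" using edgeE EQE by blast
      then show "\<exists>u v. e = {u, v} \<and> u \<noteq> v \<and> u \<in> VQ \<and> v \<in> VQ" using EQ_V[OF e] by blast
    qed
  qed
  have treeQ: "is_tree VQ EQ" using graphQ connQ acQ rVQ unfolding is_tree_def by blast
  define R where "R = E - EQ"
  define W where "W = diff_verts E EQ"
  have R_def2: "R = {f\<in>E. \<exists>c\<in>S. f \<subseteq> side v c}" unfolding R_def EQ_def by blast
  have W_def2: "W = \<Union>R" unfolding W_def diff_verts_def R_def by simp
  have comp: "\<exists>c\<in>S. {u\<in>W. conn R x u} = W \<inter> side v c" if x: "x \<in> W" for x
  proof -
    have "x \<in> \<Union>{f\<in>E. \<exists>c\<in>S. f \<subseteq> side v c}" using x unfolding W_def2 R_def2 .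
    then obtain f c where f: "f \<in> E" "c \<in> S" "f \<subseteq> side v c" "x \<in> f" by auto
    have xs: "x \<in> side v c" using f by blast
    have ev: "{v,c} \<in> E" using ChE SCh f by blast
    have "u \<in> side v c" if "conn R x u" for u
      using that unfolding conn_def
    proof (induction rule: rtranclp_induct)
      case base then show ?case using xs .
    next
      case (step y z)
      have "{y,z} \<in> R" using step(2) by (simp add: adj_def)
      then obtain c' where c': "c' \<in> S" "{y,z} \<subseteq> side v c'" unfolding R_def2 by blast
      have "y \<in> side v c'" using c' by simp
      then have "c' = c" using step(3) disjS[OF c'(1) f(2)] by blast
      then show ?case using c' by blast
    qed
    moreover have "conn R x u" if "u \<in> side v c" for u
    proof -
      have "conn {f\<in>E. f \<subseteq> side v c} x u" using in_side_conn[OF ev xs that] .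
      moreover have "{f\<in>E. f \<subseteq> side v c} \<subseteq> R" unfolding R_def2 using f(2) by blast
      ultimately show ?thesis by (rule conn_mono)
    qed
    ultimately have "{u\<in>W. conn R x u} = W \<inter> side v c" by auto
    then show ?thesis using f(2) by blast
  qed
  have compsub: "components W R \<subseteq> (\<lambda>c. W \<inter> side v c) ` S"
    unfolding components_def using comp by blast
  have cc: "card (components W R) \<le> D"
  proof -
    have "card (components W R) \<le> card ((\<lambda>c. W \<inter> side v c) ` S)"
      using card_mono[OF finite_imageI[OF finS] compsub] .
    also have "\<dots> \<le> card S" using card_image_le[OF finS] .
    also have "\<dots> \<le> card (Ch v)" using card_mono[OF finCh SCh] .
    finally show ?thesis using cardCh by linarith
  qed
  have csize: "real (card C) \<le> lam * real n" if CC: "C \<in> components W R" for C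
  proof -
    have "C \<in> (\<lambda>c. W \<inter> side v c) ` S" using compsub CC by blast
    then obtain c where c: "c \<in> S" "C = W \<inter> side v c" by blast
    have "card C \<le> card (side v c)" using c finside SCh card_mono[of "side v c" C] by blast
    then show ?thesis using small[of c] c SCh by fastforce
  qed
  show ?thesis
  proof (intro exI conjI)
    show "VQ \<subseteq> V" unfolding VQ_def by blast
    show "EQ \<subseteq> E" using EQE .
    show "is_tree VQ EQ" using treeQ .
    show "r \<in> VQ" using rVQ .
    show "(1 - 2 * lam) * real (card V) \<le> real (card VQ)"
      using cardVQ SU2 unfolding n_def by (simp add: algebra_simps)
    show "real (card VQ) \<le> (1 - lam) * real (card V) + 2 * real D"
      using cardVQ SL unfolding n_def by (simp add: algebra_simps)
    show "card (components (diff_verts E EQ) (E - EQ)) \<le> D"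
      using cc unfolding W_def R_def .
    show "\<forall>C\<in>components (diff_verts E EQ) (E - EQ). real (card C) \<le> lam * real (card V)"
      using csize unfolding W_def R_def n_def by blast
  qed
qed

end

theorem lemma7p1:
  fixes V :: "'a set" and E :: "'a set set" and r :: 'a
    and D :: nat and lam :: real
  assumes "D \<ge> 1" and "0 \<le> lam" and "lam < 1"
    and "is_tree V E" and "r \<in> V"
    and "\<forall>v\<in>V. degree E v \<le> D"
  shows "\<exists>VQ EQ. VQ \<subseteq> V \<and> EQ \<subseteq> E \<and> is_tree VQ EQ \<and> r \<in> VQ \<and>
           (1 - 2 * lam) * real (card V) \<le> real (card VQ) \<and>
           real (card VQ) \<le> (1 - lam) * real (card V) + 2 * real D \<and>
           card (components (diff_verts E EQ) (E - EQ)) \<le> D \<and>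
           (\<forall>C\<in>components (diff_verts E EQ) (E - EQ). real (card C) \<le> lam * real (card V))"
proof -
  interpret rtr V E r using assms(4,5) by unfold_locales
  show ?thesis by (rule main[OF assms(1,2,3,6)])
qed

end
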